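(* Let $n\ge1$. There exist constants $C>0$ and $\delta_0>0$ depending only on $n$ such that for every $0<\delta<\delta_0$ and every $Q\in SO(n,\mathbb C)\cap M_\delta$ there exists $U\in SO(n,\mathbb R)$ with $|Q-U|<C\delta$.
   Context: $|\cdot|$ is the operator norm. Writing $z=x+iy$ with $x,y$ real matrices, $M_\delta=\{z\in{\rm Mat}(n,\mathbb C):|y|<\delta|x|\}$. $SO(n,\mathbb C)$ is the group of complex matrices $Q$ with $QQ^T=I$, $\det Q=1$. *)

theory Defs
  imports "HOL-Analysis.Analysis"
begin

definition re_mat :: "complex^'n^'m \<Rightarrow> real^'n^'m" where
  "re_mat z = (\<chi> i j. Re (z$i$j))"

definition im_mat :: "complex^'n^'m \<Rightarrow> real^'n^'m" where
  "im_mat z = (\<chi> i j. Im (z$i$j))"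

definition cplx_mat :: "real^'n^'m \<Rightarrow> complex^'n^'m" where
  "cplx_mat U = (\<chi> i j. complex_of_real (U$i$j))"

definition opnorm_c :: "complex^'n^'m \<Rightarrow> real" where
  "opnorm_c A = onorm (\<lambda>v::complex^'n. A *v v)"

definition opnorm_r :: "real^'n^'m \<Rightarrow> real" where
  "opnorm_r A = onorm (\<lambda>v::real^'n. A *v v)"

definition M_delta :: "real \<Rightarrow> (complex^'n^'n) set" where
  "M_delta \<delta> = {z. opnorm_r (im_mat z) < \<delta> * opnorm_r (re_mat z)}"

definition SO_C :: "(complex^'n^'n) set" where
  "SO_C = {Q. Q ** transpose Q = mat 1 \<and> det Q = 1}"

definition SO_R :: "(real^'n^'n) set" where
  "SO_R = {U. U ** transpose U = mat 1 \<and> det U = 1}"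

end

theory Submission
  imports Defs
begin


definition cnj_mat :: "complex^'n^'m \<Rightarrow> complex^'n^'m" where
  "cnj_mat A = (\<chi> i j. cnj (A$i$j))"

definition cl1 :: "complex^'n^'m \<Rightarrow> real" where
  "cl1 A = (\<Sum>i\<in>UNIV. \<Sum>j\<in>UNIV. cmod (A$i$j))"

lemma cl1_nonneg: "0 \<le> cl1 A"
  unfolding cl1_def by (intro sum_nonneg) auto

lemma cl1_add: "cl1 (A + B) \<le> cl1 A + cl1 B"
  unfolding cl1_def by (simp add: sum.distrib[symmetric] sum_mono norm_triangle_ineq)

lemma cl1_diff: "cl1 (A - B) \<le> cl1 A + cl1 B"
  unfolding cl1_def by (simp add: sum.distrib[symmetric] sum_mono norm_triangle_ineq4)

lemma cl1_minus_commute: "cl1 (A - B) = cl1 (B - A)"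
  unfolding cl1_def by (simp add: norm_minus_commute)

lemma cl1_entry: "cmod (A$i$j) \<le> cl1 A"
proof -
  have "cmod (A$i$j) \<le> (\<Sum>j\<in>UNIV. cmod (A$i$j))"
    by (rule member_le_sum) auto
  also have "\<dots> \<le> cl1 A" unfolding cl1_def
    by (rule member_le_sum[where f="\<lambda>i. \<Sum>j\<in>UNIV. cmod (A$i$j)"]) (auto intro: sum_nonneg)
  finally show ?thesis .
qed

lemma cl1_bound:
  assumes "\<And>i j. cmod (A$i$j) \<le> c"
  shows "cl1 (A::complex^'n^'m) \<le> real CARD('m) * real CARD('n) * c"
proof -
  have "cl1 A \<le> (\<Sum>i\<in>(UNIV::'m set). \<Sum>j\<in>(UNIV::'n set). c)"
    unfolding cl1_def by (intro sum_mono assms)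
  then show ?thesis by simp
qed

lemma swap3: "(\<Sum>j\<in>J. \<Sum>k\<in>K. \<Sum>l\<in>L. g j k l) = (\<Sum>k\<in>K. \<Sum>l\<in>L. \<Sum>j\<in>J. (g j k l::real))"
  by (subst sum.swap) (simp add: sum.swap[of _ J])

lemma cl1_mult: "cl1 ((A::complex^'k^'m) ** (B::complex^'n^'k)) \<le> cl1 A * cl1 B"
proof -
  have "cl1 (A ** B) = (\<Sum>i\<in>UNIV. \<Sum>j\<in>UNIV. cmod (\<Sum>k\<in>UNIV. A$i$k * B$k$j))"
    unfolding cl1_def matrix_matrix_mult_def by simp
  also have "\<dots> \<le> (\<Sum>i\<in>UNIV. \<Sum>j\<in>UNIV. \<Sum>k\<in>UNIV. cmod (A$i$k) * cmod (B$k$j))"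
    by (intro sum_mono) (metis (no_types, lifting) norm_mult norm_sum sum.cong)
  also have "\<dots> \<le> (\<Sum>i\<in>UNIV. \<Sum>j\<in>UNIV. \<Sum>k\<in>UNIV. \<Sum>l\<in>UNIV. cmod (A$i$k) * cmod (B$l$j))"
    by (intro sum_mono member_le_sum) (auto intro: mult_nonneg_nonneg)
  also have "\<dots> = (\<Sum>i\<in>UNIV. \<Sum>k\<in>UNIV. \<Sum>l\<in>UNIV. \<Sum>j\<in>UNIV. cmod (A$i$k) * cmod (B$l$j))"
    by (rule sum.cong[OF refl], rule swap3)
  also have "\<dots> = (\<Sum>i\<in>UNIV. \<Sum>k\<in>UNIV. cmod (A$i$k)) * (\<Sum>l\<in>UNIV. \<Sum>j\<in>UNIV. cmod (B$l$j))"
    unfolding sum_distrib_right unfolding sum_distrib_left ..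
  finally show ?thesis unfolding cl1_def .
qed

lemma cl1_transpose: "cl1 (transpose (A::complex^'n^'n)) = cl1 A"
  unfolding cl1_def transpose_def by (simp, subst sum.swap, simp)

lemma cl1_cnj: "cl1 (cnj_mat A) = cl1 A"
  unfolding cl1_def cnj_mat_def by simp

lemma cl1_mat1: "cl1 (mat 1 :: complex^'n^'n) = real CARD('n)"
proof -
  have "cl1 (mat 1 :: complex^'n^'n) = (\<Sum>i\<in>(UNIV::'n set). \<Sum>j\<in>UNIV. if i = j then 1 else 0)"
    unfolding cl1_def mat_def by (intro sum.cong refl) auto
  then show ?thesis by simp
qed

lemma cnj_mat_mult: "cnj_mat (A ** B) = cnj_mat A ** cnj_mat B"
  unfolding cnj_mat_def matrix_matrix_mult_def by (simp add: vec_eq_iff)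

lemma cnj_mat_add: "cnj_mat (A + B) = cnj_mat A + cnj_mat B"
  unfolding cnj_mat_def by (simp add: vec_eq_iff)

lemma cnj_mat_diff: "cnj_mat (A - B) = cnj_mat A - cnj_mat B"
  unfolding cnj_mat_def by (simp add: vec_eq_iff)

lemma cnj_mat_1: "cnj_mat (mat 1) = mat 1"
  unfolding cnj_mat_def mat_def by (simp add: vec_eq_iff)

lemma cnj_mat_cplx: "cnj_mat (cplx_mat V) = cplx_mat V"
  unfolding cnj_mat_def cplx_mat_def by (simp add: vec_eq_iff)

lemma cplx_mat_mult: "cplx_mat (A ** B) = cplx_mat A ** cplx_mat B"
  unfolding cplx_mat_def matrix_matrix_mult_def by (simp add: vec_eq_iff)

lemma cplx_mat_diff: "cplx_mat (A - B) = cplx_mat A - cplx_mat B"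
  unfolding cplx_mat_def by (simp add: vec_eq_iff)

lemma cplx_mat_add: "cplx_mat (A + B) = cplx_mat A + cplx_mat B"
  unfolding cplx_mat_def by (simp add: vec_eq_iff)

lemma cplx_mat_1: "cplx_mat (mat 1) = mat 1"
  unfolding cplx_mat_def mat_def by (simp add: vec_eq_iff)

lemma cplx_mat_transpose: "cplx_mat (transpose A) = transpose (cplx_mat A)"
  unfolding cplx_mat_def transpose_def by (simp add: vec_eq_iff)

lemma cplx_mat_inj: "cplx_mat A = cplx_mat B \<Longrightarrow> A = B"
  unfolding cplx_mat_def by (simp add: vec_eq_iff)

lemma det_cplx_mat: "det (cplx_mat (A::real^'n^'n)) = complex_of_real (det A)"
  unfolding det_def cplx_mat_def by simp

lemma norm_vec_le_l1: "norm (x::'a::real_normed_vector^'n) \<le> (\<Sum>i\<in>UNIV. norm (x$i))"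
  unfolding norm_vec_def by (rule L2_set_le_sum) auto

lemma norm_mat_vec_cl1: "norm ((A::complex^'n^'m) *v x) \<le> cl1 A * norm x"
proof -
  have "norm (A *v x) \<le> (\<Sum>i\<in>UNIV. cmod ((A *v x)$i))" by (rule norm_vec_le_l1)
  also have "\<dots> \<le> (\<Sum>i\<in>UNIV. \<Sum>j\<in>UNIV. cmod (A$i$j) * norm x)"
  proof (rule sum_mono)
    fix i
    have "cmod ((A *v x)$i) \<le> (\<Sum>j\<in>UNIV. cmod (A$i$j * x$j))"
      unfolding matrix_vector_mult_def by (simp add: norm_sum)
    also have "\<dots> \<le> (\<Sum>j\<in>UNIV. cmod (A$i$j) * norm x)"
      unfolding norm_mult by (intro sum_mono mult_left_mono) (auto intro: Finite_Cartesian_Product.norm_nth_le)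
    finally show "cmod ((A *v x)$i) \<le> (\<Sum>j\<in>UNIV. cmod (A$i$j) * norm x)" .
  qed
  finally show ?thesis unfolding cl1_def by (simp add: sum_distrib_right)
qed

lemma opnorm_c_le_cl1: "opnorm_c A \<le> cl1 A"
  unfolding opnorm_c_def by (rule onorm_le) (rule norm_mat_vec_cl1)



lemma matrix_add_rdistrib': "(A + B) ** C = A ** C + B ** (C::'a::ring_1^'p^'n)"
  by (vector matrix_matrix_mult_def sum.distrib[symmetric] field_simps)

lemma matrix_diff_rdistrib': "(A - B) ** C = A ** C - B ** (C::'a::ring_1^'p^'n)"
  by (vector matrix_matrix_mult_def sum_subtractf[symmetric] field_simps)

lemma matrix_diff_ldistrib': "(C::'a::ring_1^'p^'n) ** (A - B) = C ** A - C ** B"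
  by (vector matrix_matrix_mult_def sum_subtractf[symmetric] field_simps)

lemma transpose_add': "transpose (A + B) = transpose A + transpose (B::'a::ring_1^'n^'m)"
  by (simp add: transpose_def vec_eq_iff)

lemma transpose_diff': "transpose (A - B) = transpose A - transpose (B::'a::ring_1^'n^'m)"
  by (simp add: transpose_def vec_eq_iff)

lemma norm_axis_gen: "norm (axis j (1::'a::real_normed_field)) = 1"
proof -
  have "(\<Sum>i\<in>UNIV. (norm (axis j (1::'a) $ i))\<^sup>2) = (\<Sum>i\<in>UNIV. if i = j then 1 else 0)"
    by (intro sum.cong refl) (simp add: axis_def)
  then show ?thesis unfolding norm_vec_def L2_set_def by simp
qed

lemma inv_bound:
  fixes M :: "'a::real_normed_field^'n^'n"
  assumes "\<And>x. norm x \<le> c * norm (M *v x)"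
  shows "\<exists>B. B ** M = mat 1 \<and> M ** B = mat 1 \<and> (\<forall>i j. norm (B$i$j) \<le> c)"
proof -
  have "inj ((*v) M)"
  proof (rule injI)
    fix x y assume "M *v x = M *v y"
    then have "M *v (x - y) = 0" by (simp add: matrix_vector_mult_diff_distrib)
    then have "norm (x - y) \<le> 0" using assms[of "x - y"] by simp
    then show "x = y" by simp
  qed
  then obtain B where BM: "B ** M = mat 1" using matrix_left_invertible_injective by blast
  then have MB: "M ** B = mat 1" using matrix_left_right_inverse by blast
  have "norm (B$i$j) \<le> c" for i j
  proof -
    have "B$i$j = (B *v axis j 1) $ i"
      by (simp add: matrix_vector_mult_def axis_def if_distrib cong: if_cong)
    then have "norm (B$i$j) \<le> norm (B *v axis j 1)"
      by (simp add: Finite_Cartesian_Product.norm_nth_le)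
    also have "\<dots> \<le> c * norm (M *v (B *v axis j 1))" by (rule assms)
    also have "M *v (B *v axis j 1) = axis j 1"
      by (simp add: matrix_vector_mul_assoc MB)
    also have "norm (axis j (1::'a)) = 1" by (rule norm_axis_gen)
    finally show ?thesis by simp
  qed
  with BM MB show ?thesis by blast
qed



lemma re_im_cl1:
  fixes B :: "complex^'n^'m"
  shows "2 * cl1 (cplx_mat (re_mat B) - B) = cl1 (B - cnj_mat B)"
proof -
  have e: "2 * cmod (complex_of_real (Re z) - z) = cmod (z - cnj z)" for z
  proof -
    have "complex_of_real (Re z) - z = - (\<i> * complex_of_real (Im z))"
      by (simp add: complex_eq_iff)
    moreover have "z - cnj z = 2 * \<i> * complex_of_real (Im z)"
      by (simp add: complex_eq_iff)
    ultimately show ?thesis by (simp add: norm_mult)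
  qed
  show ?thesis unfolding cl1_def cplx_mat_def re_mat_def cnj_mat_def
    by (simp add: sum_distrib_left e)
qed

lemma local_cayley:
  fixes W :: "complex^'n^'n"
  assumes WW: "W ** transpose W = mat 1" and E: "cl1 (W - mat 1) \<le> 1/4"
  shows "\<exists>U\<in>SO_R. cl1 (W - cplx_mat U) \<le> (2 * real CARD('n) + 1) * real CARD('n) ^ 6 * cl1 (W - cnj_mat W)"
proof -
  define n where "n = real CARD('n)"
  have n1: "1 \<le> n" unfolding n_def by (simp add: Suc_le_eq)
  have WtW: "transpose W ** W = mat 1" using WW matrix_left_right_inverse by blast
  define M where "M = mat 1 + W"
  have Mx: "norm x \<le> 1 * norm (M *v x)" for x
  proof -
    have Meq: "M *v x = 2 *\<^sub>R x + (W - mat 1) *v x"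
      unfolding M_def by (simp add: algebra_simps scaleR_2)
    moreover have "norm ((W - mat 1) *v x) \<le> 1/4 * norm x"
      by (rule order_trans[OF norm_mat_vec_cl1]) (use mult_right_mono[OF E, of "norm x"] in simp)
    moreover have "2 * norm x - norm ((W - mat 1) *v x) \<le> norm (2 *\<^sub>R x + (W - mat 1) *v x)"
      using norm_triangle_ineq2[of "2 *\<^sub>R x" "- ((W - mat 1) *v x)"] by simp
    moreover have "0 \<le> norm x" by simp
    ultimately show ?thesis unfolding Meq by linarith
  qed
  obtain B where BM: "B ** M = mat 1" and MB: "M ** B = mat 1" and Bb: "\<And>i j. cmod (B$i$j) \<le> 1"
    using inv_bound[OF Mx] by blast
  have MMt: "M ** transpose M = M + transpose M"
    unfolding M_def by (simp add: matrix_add_ldistrib matrix_add_rdistrib' transpose_add' WW)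
  have "B ** (M ** transpose M) ** transpose B = mat 1"
  proof -
    have "B ** (M ** transpose M) ** transpose B = (B ** M) ** transpose (B ** M)"
      by (simp add: matrix_mul_assoc matrix_transpose_mul)
    then show ?thesis by (simp add: BM)
  qed
  moreover have "B ** (M ** transpose M) ** transpose B = transpose B + B"
  proof -
    have "B ** (M + transpose M) ** transpose B = (B ** M) ** transpose B + B ** transpose (B ** M)"
      by (simp add: matrix_add_ldistrib matrix_add_rdistrib' matrix_mul_assoc matrix_transpose_mul)
    then show ?thesis by (simp add: BM MMt)
  qed
  ultimately have BBt: "B + transpose B = mat 1" by (simp add: add.commute)
  define R where "R = re_mat B"
  have RRt: "R + transpose R = mat 1"
  proof -
    have "Re ((B + transpose B)$i$j) = (mat 1 :: real^'n^'n)$i$j" for i j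
      using BBt by (simp add: mat_def)
    then show ?thesis unfolding R_def re_mat_def transpose_def by (simp add: vec_eq_iff)
  qed
  have Rx: "norm x \<le> 2 * norm (R *v x)" for x :: "real^'n"
  proof -
    have "inner x (transpose R *v x) = inner x (R *v x)"
      using dot_lmul_matrix[of x R x] by (simp add: inner_commute)
    moreover have "inner x ((R + transpose R) *v x) = inner x x"
      using RRt by simp
    ultimately have "inner x x = 2 * inner x (R *v x)"
      by (simp add: matrix_vector_mult_add_rdistrib inner_add_right)
    also have "\<dots> \<le> 2 * (norm x * norm (R *v x))"
      using norm_cauchy_schwarz by simp
    finally have "norm x * norm x \<le> norm x * (2 * norm (R *v x))"
      by (simp add: power2_norm_eq_inner[symmetric] power2_eq_square)
    then show ?thesis
      by (cases "x = 0") (auto simp: mult_le_cancel_left)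
  qed
  obtain Ri where RiR: "Ri ** R = mat 1" and RRi: "R ** Ri = mat 1" and Rib: "\<And>i j. norm (Ri$i$j) \<le> 2"
    using inv_bound[OF Rx] by blast
  define U where "U = Ri - mat 1"
  have U2: "U = Ri ** transpose R"
  proof -
    have "transpose R = mat 1 - R" using RRt by (simp add: algebra_simps)
    then show ?thesis unfolding U_def by (simp add: matrix_diff_ldistrib' RiR)
  qed
  have RiRit: "Ri ** transpose Ri = Ri + transpose Ri"
  proof -
    have "Ri ** (R + transpose R) ** transpose Ri = (Ri ** R) ** transpose Ri + Ri ** transpose (Ri ** R)"
      by (simp add: matrix_add_ldistrib matrix_add_rdistrib' matrix_mul_assoc matrix_transpose_mul)
    then show ?thesis by (simp add: RRt RiR add.commute)
  qed
  have "U ** transpose U = mat 1"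
    unfolding U_def
    by (simp add: matrix_diff_ldistrib' matrix_diff_rdistrib' transpose_diff' RiRit)
  moreover have "det U = 1"
  proof -
    have "det U = det Ri * det R" by (simp add: U2 det_mul det_transpose)
    also have "\<dots> = 1" using RiR by (metis det_I det_mul)
    finally show ?thesis .
  qed
  ultimately have USO: "U \<in> SO_R" unfolding SO_R_def by blast
  define T where "T = cl1 (W - cnj_mat W)"
  have eq1: "W - cplx_mat U = M ** (cplx_mat R - B) ** cplx_mat Ri"
  proof -
    have "M ** (cplx_mat R - B) ** cplx_mat Ri = M ** cplx_mat (R ** Ri) - (M ** B) ** cplx_mat Ri"
      by (simp add: matrix_diff_ldistrib' matrix_diff_rdistrib' matrix_mul_assoc cplx_mat_mult)
    also have "\<dots> = M - cplx_mat Ri" by (simp add: RRi MB cplx_mat_1)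
    finally show ?thesis unfolding U_def M_def by (simp add: cplx_mat_diff cplx_mat_1)
  qed
  have eq2: "B - cnj_mat B = B ** (cnj_mat W - W) ** cnj_mat B"
  proof -
    have cMB: "cnj_mat M ** cnj_mat B = mat 1" using MB by (metis cnj_mat_mult cnj_mat_1)
    have "B ** (cnj_mat M - M) ** cnj_mat B = B ** (cnj_mat M ** cnj_mat B) - (B ** M) ** cnj_mat B"
      by (simp add: matrix_diff_ldistrib' matrix_diff_rdistrib' matrix_mul_assoc)
    also have "\<dots> = B - cnj_mat B" by (simp add: cMB BM)
    finally show ?thesis unfolding M_def by (simp add: cnj_mat_add cnj_mat_1)
  qed
  have clB: "cl1 B \<le> n^2" using cl1_bound[of B 1] Bb by (simp add: n_def power2_eq_square)
  have clRi: "cl1 (cplx_mat Ri) \<le> 2 * n^2"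
    using cl1_bound[of "cplx_mat Ri" 2] Rib by (simp add: n_def power2_eq_square cplx_mat_def)
  have clW: "cl1 W \<le> n + 1/4"
    using cl1_add[of "mat 1" "W - mat 1"] E cl1_mat1[where 'n='n] by (simp add: n_def)
  have clM: "cl1 M \<le> 2 * n + 1"
    using cl1_add[of "mat 1" W] clW cl1_mat1[where 'n='n] unfolding M_def by (simp add: n_def)
  have cWW: "cl1 (cnj_mat W - W) = T" unfolding T_def by (rule cl1_minus_commute)
  have "cl1 (B - cnj_mat B) \<le> cl1 B * T * cl1 (cnj_mat B)"
    unfolding eq2 cWW[symmetric] by (meson cl1_mult cl1_nonneg mult_right_mono order_trans)
  also have "\<dots> \<le> n^2 * T * n^2"
    using clB by (simp add: cl1_cnj T_def cl1_nonneg mult_mono)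
  finally have BcB: "cl1 (cplx_mat R - B) \<le> n^4 * T / 2"
    using re_im_cl1[of B] unfolding R_def by (simp add: power4_eq_xxxx power2_eq_square mult_ac)
  have "cl1 (W - cplx_mat U) \<le> cl1 M * cl1 (cplx_mat R - B) * cl1 (cplx_mat Ri)"
    unfolding eq1 by (meson cl1_mult cl1_nonneg mult_right_mono order_trans)
  also have "\<dots> \<le> (2 * n + 1) * (n^4 * T / 2) * (2 * n^2)"
    using cl1_nonneg[of "W - cnj_mat W"] by (intro mult_mono clM BcB clRi) (auto simp: cl1_nonneg n_def T_def)
  also have "\<dots> = (2 * n + 1) * n^6 * T" by (simp add: power_add[symmetric] algebra_simps)
  finally show ?thesis using USO unfolding n_def T_def by blast
qed



lemma cont_cl1: "continuous_on UNIV (cl1 :: complex^'n^'m \<Rightarrow> real)"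
proof -
  have "cl1 = (\<lambda>Q::complex^'n^'m. \<Sum>i\<in>UNIV. \<Sum>j\<in>UNIV. cmod (Q$i$j))"
    by (rule ext) (simp add: cl1_def)
  moreover have "continuous_on UNIV (\<lambda>Q::complex^'n^'m. \<Sum>i\<in>UNIV. \<Sum>j\<in>UNIV. cmod (Q$i$j))"
    by (intro continuous_intros)
  ultimately show ?thesis by metis
qed

lemma cont_T: "continuous_on UNIV (\<lambda>Q::complex^'n^'m. cl1 (Q - cnj_mat Q))"
proof -
  have "(\<lambda>Q::complex^'n^'m. cl1 (Q - cnj_mat Q)) = (\<lambda>Q. \<Sum>i\<in>UNIV. \<Sum>j\<in>UNIV. cmod (Q$i$j - cnj (Q$i$j)))"
    by (rule ext) (simp add: cl1_def cnj_mat_def)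
  moreover have "continuous_on UNIV (\<lambda>Q::complex^'n^'m. \<Sum>i\<in>UNIV. \<Sum>j\<in>UNIV. cmod (Q$i$j - cnj (Q$i$j)))"
    by (intro continuous_intros)
  ultimately show ?thesis by metis
qed

lemma cont_QQt: "continuous_on UNIV (\<lambda>Q::complex^'n^'n. Q ** transpose Q)"
proof -
  have "(\<lambda>Q::complex^'n^'n. Q ** transpose Q) = (\<lambda>Q. \<chi> i j. \<Sum>k\<in>UNIV. Q$i$k * Q$j$k)"
    by (rule ext) (simp add: matrix_matrix_mult_def transpose_def)
  moreover have "continuous_on UNIV (\<lambda>Q::complex^'n^'n. \<chi> i j. \<Sum>k\<in>UNIV. Q$i$k * Q$j$k)"
    by (intro continuous_on_vec_lambda continuous_intros)
  ultimately show ?thesis by metis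
qed

lemma norm_le_cl1: "norm (Q::complex^'n^'m) \<le> cl1 Q"
proof -
  have "norm Q \<le> (\<Sum>i\<in>UNIV. norm (Q$i))" by (rule norm_vec_le_l1)
  also have "\<dots> \<le> (\<Sum>i\<in>UNIV. \<Sum>j\<in>UNIV. cmod (Q$i$j))"
    by (intro sum_mono norm_vec_le_l1)
  finally show ?thesis unfolding cl1_def .
qed

lemma real_of_T0:
  assumes "cl1 (Q - cnj_mat Q) = 0"
  shows "Q = cplx_mat (re_mat (Q::complex^'n^'m))"
proof -
  have "\<forall>i\<in>UNIV. \<forall>j\<in>UNIV. cmod (Q$i$j - cnj (Q$i$j)) = 0"
    using assms unfolding cl1_def cnj_mat_def
    by (simp add: sum_nonneg_eq_0_iff sum_nonneg)
  then have "Q$i$j = complex_of_real (Re (Q$i$j))" for i j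
    by (simp add: complex_eq_iff)
  then show ?thesis unfolding cplx_mat_def re_mat_def by (simp add: vec_eq_iff)
qed

lemma compact_step:
  fixes r Rb :: real
  assumes r: "r > 0"
  shows "\<exists>\<epsilon>>0. \<forall>Q::complex^'n^'n. Q \<in> SO_C \<and> cl1 Q \<le> Rb \<and> cl1 (Q - cnj_mat Q) < \<epsilon>
            \<longrightarrow> (\<exists>V\<in>SO_R. cl1 (Q - cplx_mat V) < r)"
proof -
  define K where "K = {Q::complex^'n^'n. Q ** transpose Q = mat 1 \<and> det Q = 1 \<and> cl1 Q \<le> Rb \<and>
      (\<forall>V. V \<in> SO_R \<longrightarrow> r \<le> cl1 (Q - cplx_mat V))}"
  have cl: "closed K"
    unfolding K_def
  proof (intro closed_Collect_conj closed_Collect_all)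
    show "closed {Q::complex^'n^'n. Q ** transpose Q = mat 1}"
      by (intro closed_Collect_eq cont_QQt continuous_intros)
    show "closed {Q::complex^'n^'n. det Q = 1}"
      unfolding det_def by (intro closed_Collect_eq continuous_intros)
    show "closed {Q::complex^'n^'n. cl1 Q \<le> Rb}"
      by (intro closed_Collect_le cont_cl1 continuous_intros)
    fix V :: "real^'n^'n"
    show "closed {Q::complex^'n^'n. V \<in> SO_R \<longrightarrow> r \<le> cl1 (Q - cplx_mat V)}"
    proof (cases "V \<in> SO_R")
      case True
      have "continuous_on UNIV (\<lambda>Q::complex^'n^'n. cl1 (Q - cplx_mat V))"
        by (rule continuous_on_compose2[OF cont_cl1]) (auto intro: continuous_intros)
      then show ?thesis using True by (simp add: closed_Collect_le)
    next
      case False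
      then show ?thesis by simp
    qed
  qed
  have bd: "bounded K"
  proof -
    have "K \<subseteq> cball 0 Rb"
    proof
      fix Q assume "Q \<in> K"
      then have "cl1 Q \<le> Rb" unfolding K_def by blast
      then show "Q \<in> cball 0 Rb" using norm_le_cl1[of Q] by simp
    qed
    then show ?thesis using bounded_cball bounded_subset by blast
  qed
  have cp: "compact K" using cl bd compact_eq_bounded_closed by blast
  obtain \<epsilon> where ep: "\<epsilon> > 0" and epK: "\<forall>Q\<in>K. \<epsilon> \<le> cl1 (Q - cnj_mat Q)"
  proof (cases "K = {}")
    case True
    then show ?thesis using that[of 1] by simp
  next
    case False
    obtain Q0 where Q0K: "Q0 \<in> K" and Q0min: "\<forall>Q\<in>K. cl1 (Q0 - cnj_mat Q0) \<le> cl1 (Q - cnj_mat Q)"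
      using continuous_attains_inf[OF cp False continuous_on_subset[OF cont_T]] by blast
    have "cl1 (Q0 - cnj_mat Q0) \<noteq> 0"
    proof
      assume h: "cl1 (Q0 - cnj_mat Q0) = 0"
      define V where "V = re_mat Q0"
      have QV: "Q0 = cplx_mat V" unfolding V_def by (rule real_of_T0[OF h])
      have "cplx_mat (V ** transpose V) = cplx_mat (mat 1)"
        using Q0K QV unfolding K_def by (simp add: cplx_mat_mult cplx_mat_transpose cplx_mat_1)
      then have "V ** transpose V = mat 1" by (rule cplx_mat_inj)
      moreover have "det V = 1"
        using Q0K QV unfolding K_def by (simp add: det_cplx_mat)
      ultimately have "V \<in> SO_R" unfolding SO_R_def by blast
      then have "r \<le> cl1 (Q0 - cplx_mat V)" using Q0K unfolding K_def by blast
      then show False using r QV by (simp add: cl1_def)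
    qed
    then have "0 < cl1 (Q0 - cnj_mat Q0)" using cl1_nonneg[of "Q0 - cnj_mat Q0"] by linarith
    then show ?thesis using that Q0min by blast
  qed
  show ?thesis
  proof (intro exI[of _ \<epsilon>] conjI allI impI ep)
    fix Q :: "complex^'n^'n"
    assume h: "Q \<in> SO_C \<and> cl1 Q \<le> Rb \<and> cl1 (Q - cnj_mat Q) < \<epsilon>"
    then have "Q \<notin> K" using epK by fastforce
    then show "\<exists>V\<in>SO_R. cl1 (Q - cplx_mat V) < r"
      using h unfolding K_def SO_C_def by (auto simp: not_le)
  qed
qed



lemma orth_entry:
  assumes "V ** transpose V = mat 1"
  shows "\<bar>(V::real^'n^'n)$i$j\<bar> \<le> 1"
proof -
  have "(\<Sum>k\<in>UNIV. V$i$k * V$i$k) = 1"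
    using assms[THEN arg_cong[where f="\<lambda>A. A$i$i"]]
    by (simp add: matrix_matrix_mult_def transpose_def mat_def)
  moreover have "V$i$j * V$i$j \<le> (\<Sum>k\<in>UNIV. V$i$k * V$i$k)"
    by (rule member_le_sum[where f="\<lambda>k. V$i$k * V$i$k"]) auto
  ultimately have "(V$i$j)^2 \<le> 1" by (simp add: power2_eq_square)
  then show ?thesis by (simp add: abs_square_le_1)
qed

lemma cl1_orth:
  assumes "V ** transpose V = mat 1"
  shows "cl1 (cplx_mat (V::real^'n^'n)) \<le> real CARD('n) ^ 2"
  using cl1_bound[of "cplx_mat V" 1] orth_entry[OF assms]
  by (simp add: cplx_mat_def power2_eq_square)

lemma global_step:
  "\<exists>K>0. \<exists>\<epsilon>>0. \<forall>Q::complex^'n^'n. Q \<in> SO_C \<and> cl1 Q \<le> 4 * real CARD('n) ^ 3 \<and> cl1 (Q - cnj_mat Q) < \<epsilon>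
      \<longrightarrow> (\<exists>U\<in>SO_R. cl1 (Q - cplx_mat U) \<le> K * cl1 (Q - cnj_mat Q))"
proof -
  define n where "n = real CARD('n)"
  have n1: "1 \<le> n" unfolding n_def by (simp add: Suc_le_eq)
  define K0 where "K0 = (2 * n + 1) * n ^ 6"
  have K0: "K0 > 0" unfolding K0_def using n1 by simp
  obtain \<epsilon> where ep: "\<epsilon> > 0" and epH: "\<forall>Q::complex^'n^'n. Q \<in> SO_C \<and> cl1 Q \<le> 4 * n ^ 3 \<and> cl1 (Q - cnj_mat Q) < \<epsilon>
            \<longrightarrow> (\<exists>V\<in>SO_R. cl1 (Q - cplx_mat V) < 1 / (4 * n^2))"
    using compact_step[of "1 / (4 * n^2)" "4 * n ^ 3"] n1 by auto
  have "\<forall>Q::complex^'n^'n. Q \<in> SO_C \<and> cl1 Q \<le> 4 * n ^ 3 \<and> cl1 (Q - cnj_mat Q) < \<epsilon>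
      \<longrightarrow> (\<exists>U\<in>SO_R. cl1 (Q - cplx_mat U) \<le> (K0 * n^4) * cl1 (Q - cnj_mat Q))"
  proof (intro allI impI)
    fix Q :: "complex^'n^'n"
    assume h: "Q \<in> SO_C \<and> cl1 Q \<le> 4 * n ^ 3 \<and> cl1 (Q - cnj_mat Q) < \<epsilon>"
    then obtain V where VSO: "V \<in> SO_R" and QV: "cl1 (Q - cplx_mat V) < 1 / (4 * n^2)"
      using epH by blast
    have QQ: "Q ** transpose Q = mat 1" using h unfolding SO_C_def by blast
    have VV: "V ** transpose V = mat 1" and dV: "det V = 1" using VSO unfolding SO_R_def by auto
    define cV where "cV = cplx_mat V"
    have cVV: "cV ** transpose cV = mat 1"
      unfolding cV_def using VV by (metis cplx_mat_mult cplx_mat_transpose cplx_mat_1)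
    then have cVtV: "transpose cV ** cV = mat 1" using matrix_left_right_inverse by blast
    have clV: "cl1 cV \<le> n^2" unfolding cV_def n_def by (rule cl1_orth[OF VV])
    have clVt: "cl1 (transpose cV) \<le> n^2" using clV by (simp add: cl1_transpose)
    define W where "W = Q ** transpose cV"
    have WW: "W ** transpose W = mat 1"
    proof -
      have "W ** transpose W = Q ** (transpose cV ** cV) ** transpose Q"
        unfolding W_def by (simp add: matrix_transpose_mul matrix_mul_assoc)
      then show ?thesis by (simp add: cVtV QQ)
    qed
    have WI: "W - mat 1 = (Q - cV) ** transpose cV"
      unfolding W_def by (simp add: matrix_diff_rdistrib' cVV)
    have "cl1 (W - mat 1) \<le> cl1 (Q - cV) * cl1 (transpose cV)"
      unfolding WI by (rule cl1_mult)
    also have "\<dots> \<le> 1 / (4 * n^2) * n^2"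
      using QV clVt cl1_nonneg unfolding cV_def by (intro mult_mono) auto
    also have "\<dots> = 1/4" using n1 by simp
    finally have WI4: "cl1 (W - mat 1) \<le> 1/4" .
    obtain U' where U'SO: "U' \<in> SO_R" and U'b: "cl1 (W - cplx_mat U') \<le> K0 * cl1 (W - cnj_mat W)"
      using local_cayley[OF WW WI4] unfolding K0_def n_def by blast
    have "W - cnj_mat W = (Q - cnj_mat Q) ** transpose cV"
      unfolding W_def cV_def
      by (simp add: matrix_diff_rdistrib' cnj_mat_mult cplx_mat_transpose[symmetric] cnj_mat_cplx)
    then have TW: "cl1 (W - cnj_mat W) \<le> cl1 (Q - cnj_mat Q) * n^2"
      using cl1_mult[of "Q - cnj_mat Q" "transpose cV"] clVt cl1_nonneg[of "Q - cnj_mat Q"]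
      by (metis mult_left_mono order_trans)
    define U where "U = U' ** V"
    have U'U': "U' ** transpose U' = mat 1" and dU': "det U' = 1" using U'SO unfolding SO_R_def by auto
    have "U ** transpose U = mat 1"
    proof -
      have "U ** transpose U = U' ** (V ** transpose V) ** transpose U'"
        unfolding U_def by (simp add: matrix_transpose_mul matrix_mul_assoc)
      then show ?thesis by (simp add: VV U'U')
    qed
    moreover have "det U = 1" unfolding U_def by (simp add: det_mul dU' dV)
    ultimately have USO: "U \<in> SO_R" unfolding SO_R_def by blast
    have WV: "W ** cV = Q" unfolding W_def by (simp add: matrix_mul_assoc[symmetric] cVtV)
    have QU: "Q - cplx_mat U = (W - cplx_mat U') ** cV"
      unfolding U_def cV_def by (simp add: matrix_diff_rdistrib' cplx_mat_mult WV[unfolded cV_def])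
    have "cl1 (Q - cplx_mat U) \<le> cl1 (W - cplx_mat U') * cl1 cV"
      unfolding QU by (rule cl1_mult)
    also have "\<dots> \<le> (K0 * (cl1 (Q - cnj_mat Q) * n^2)) * n^2"
      using U'b TW clV K0 cl1_nonneg
      by (intro mult_mono) (auto intro: order_trans mult_left_mono)
    also have "\<dots> = (K0 * n^4) * cl1 (Q - cnj_mat Q)" by (simp add: power4_eq_xxxx power2_eq_square mult_ac)
    finally show "\<exists>U\<in>SO_R. cl1 (Q - cplx_mat U) \<le> (K0 * n^4) * cl1 (Q - cnj_mat Q)"
      using USO by blast
  qed
  moreover have "K0 * n^4 > 0" using K0 n1 by simp
  ultimately show ?thesis using ep unfolding n_def by blast
qed



lemma abs_le_sqrt_of_sq: "x^2 \<le> s \<Longrightarrow> \<bar>x::real\<bar> \<le> sqrt s"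
  by (metis real_sqrt_abs real_sqrt_le_mono)

lemma cmod_cnj_diff: "cmod (z - cnj z) = 2 * \<bar>Im z\<bar>"
proof -
  have "z - cnj z = 2 * \<i> * complex_of_real (Im z)" by (simp add: complex_eq_iff)
  then show ?thesis by (simp add: norm_mult)
qed

lemma sq_le_sum2:
  fixes f :: "'a::finite \<Rightarrow> 'b::finite \<Rightarrow> real"
  shows "(f i j)^2 \<le> (\<Sum>i\<in>UNIV. \<Sum>j\<in>UNIV. (f i j)^2)"
proof -
  have "(f i j)^2 \<le> (\<Sum>j\<in>UNIV. (f i j)^2)"
    by (rule member_le_sum[where f="\<lambda>j. (f i j)^2"]) auto
  also have "\<dots> \<le> (\<Sum>i\<in>UNIV. \<Sum>j\<in>UNIV. (f i j)^2)"
    by (rule member_le_sum[where f="\<lambda>i. \<Sum>j\<in>UNIV. (f i j)^2"]) (auto intro: sum_nonneg)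
  finally show ?thesis .
qed

theorem lemma8p1:
  shows "\<exists>C>0. \<exists>\<delta>0>0. \<forall>\<delta>. 0 < \<delta> \<and> \<delta> < \<delta>0 \<longrightarrow>
           (\<forall>Q::complex^'n::finite^'n. Q \<in> SO_C \<inter> M_delta \<delta> \<longrightarrow>
              (\<exists>U\<in>SO_R. opnorm_c (Q - cplx_mat U) < C * \<delta>))"
proof -
  define n where "n = real CARD('n)"
  have n1: "1 \<le> n" unfolding n_def by (simp add: Suc_le_eq)
  obtain K \<epsilon> where K: "K > 0" and ep: "\<epsilon> > 0" and H: "\<forall>Q::complex^'n^'n. Q \<in> SO_C \<and> cl1 Q \<le> 4 * n ^ 3 \<and> cl1 (Q - cnj_mat Q) < \<epsilon>
      \<longrightarrow> (\<exists>U\<in>SO_R. cl1 (Q - cplx_mat U) \<le> K * cl1 (Q - cnj_mat Q))"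
    using global_step unfolding n_def by blast
  define \<delta>0 where "\<delta>0 = min (1 / (2 * n^3)) (\<epsilon> / (4 * n^5))"
  have d0: "\<delta>0 > 0" unfolding \<delta>0_def using n1 ep by simp
  define C where "C = 4 * K * n^5 + 1"
  have C0: "C > 0" unfolding C_def using K n1 by (simp add: add_pos_nonneg)
  have main: "\<exists>U\<in>SO_R. opnorm_c (Q - cplx_mat U) < C * \<delta>"
    if \<delta>: "0 < \<delta>" "\<delta> < \<delta>0" and QS: "Q \<in> SO_C" and QM: "Q \<in> M_delta \<delta>" for \<delta> and Q :: "complex^'n^'n"
  proof -
    define X where "X = re_mat Q"
    define Y where "Y = im_mat Q"
    define oX where "oX = opnorm_r X"
    define oY where "oY = opnorm_r Y"
    have oXY: "oY < \<delta> * oX" using QM unfolding M_delta_def oX_def oY_def X_def Y_def by simp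
    have oY0: "0 \<le> oY" unfolding oY_def opnorm_r_def
      by (rule onorm_pos_le) (rule matrix_vector_mul_bounded_linear)
    have Yij: "\<bar>Y$i$j\<bar> \<le> oY" for i j
      unfolding oY_def opnorm_r_def by (rule matrix_component_le_onorm)
    define s where "s = (\<Sum>i\<in>UNIV. \<Sum>j\<in>(UNIV::'n set). (X$i$j)^2)"
    define t where "t = (\<Sum>i\<in>UNIV. \<Sum>j\<in>(UNIV::'n set). (Y$i$j)^2)"
    have QQ: "Q ** transpose Q = mat 1" using QS unfolding SO_C_def by blast
    have row: "(\<Sum>k\<in>UNIV. (X$i$k)^2 - (Y$i$k)^2) = 1" for i
    proof -
      have "(\<Sum>k\<in>UNIV. Q$i$k * Q$i$k) = 1"
        using QQ[THEN arg_cong[where f="\<lambda>A. A$i$i"]]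
        by (simp add: matrix_matrix_mult_def transpose_def mat_def)
      then have "Re (\<Sum>k\<in>UNIV. Q$i$k * Q$i$k) = 1" by simp
      then show ?thesis unfolding X_def Y_def re_mat_def im_mat_def
        by (simp add: Re_sum power2_eq_square)
    qed
    have st: "s - t = n"
    proof -
      have "s - t = (\<Sum>i\<in>UNIV. \<Sum>k\<in>UNIV. (X$i$k)^2 - (Y$i$k)^2)"
        unfolding s_def t_def by (simp add: sum_subtractf)
      also have "\<dots> = n" by (simp add: row n_def)
      finally show ?thesis .
    qed
    have Xij: "\<bar>X$i$j\<bar> \<le> sqrt s" for i j
      unfolding s_def by (rule abs_le_sqrt_of_sq) (rule sq_le_sum2[where f="\<lambda>i j. X$i$j"])
    have oXb: "oX \<le> n^2 * sqrt s"
    proof -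
      have "oX \<le> (\<Sum>i\<in>UNIV. \<Sum>j\<in>UNIV. \<bar>X$i$j\<bar>)"
        unfolding oX_def opnorm_r_def by (rule onorm_le_matrix_component_sum)
      also have "\<dots> \<le> (\<Sum>i\<in>(UNIV::'n set). \<Sum>j\<in>(UNIV::'n set). sqrt s)"
        by (intro sum_mono Xij)
      finally show ?thesis by (simp add: n_def power2_eq_square)
    qed
    have oX0: "0 \<le> oX" unfolding oX_def opnorm_r_def
      by (rule onorm_pos_le) (rule matrix_vector_mul_bounded_linear)
    have s0: "0 \<le> s" unfolding s_def by (intro sum_nonneg) auto
    have t0: "0 \<le> t" unfolding t_def by (intro sum_nonneg) auto
    have tb: "t \<le> n^2 * oY^2"
    proof -
      have "t \<le> (\<Sum>i\<in>(UNIV::'n set). \<Sum>j\<in>(UNIV::'n set). oY^2)"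
        unfolding t_def using Yij oY0
        by (intro sum_mono) (metis abs_le_square_iff abs_of_nonneg)
      then show ?thesis by (simp add: n_def power2_eq_square)
    qed
    have "oY^2 \<le> (\<delta> * oX)^2" using oXY oY0 by (intro power_mono) auto
    also have "\<dots> \<le> (\<delta> * (n^2 * sqrt s))^2"
      using oXb oX0 \<delta> by (intro power_mono mult_left_mono) auto
    also have "\<dots> = \<delta>^2 * n^4 * s" using s0 by (simp add: power_mult_distrib flip: power_mult)
    finally have oY2: "oY^2 \<le> \<delta>^2 * n^4 * s" .
    have dn: "\<delta> * n^3 \<le> 1/2"
    proof -
      have "\<delta> \<le> 1 / (2 * n^3)" using \<delta> unfolding \<delta>0_def by simp
      then show ?thesis using n1 by (simp add: field_simps)
    qed
    have dn2: "\<delta>^2 * n^6 \<le> 1/4"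
    proof -
      have "(\<delta> * n^3)^2 \<le> (1/2)^2" using dn \<delta> n1 by (intro power_mono) auto
      moreover have "(\<delta> * n^3)^2 = \<delta>^2 * n^6" by (simp add: power_mult_distrib flip: power_mult)
      moreover have "(1/2::real)^2 = 1/4" by (simp add: power2_eq_square)
      ultimately show ?thesis by simp
    qed
    have "t \<le> n^2 * (\<delta>^2 * n^4 * s)" using tb oY2 n1 by (meson mult_left_mono order_trans zero_le_power2)
    also have "\<dots> = (\<delta>^2 * n^6) * s" by (simp add: power_add[symmetric] mult_ac)
    also have "\<dots> \<le> 1/4 * s" using dn2 s0 by (intro mult_right_mono) auto
    finally have ts: "t \<le> s / 4" by simp
    have s2n: "s \<le> 2 * n" using st ts n1 by linarith
    have sqs: "sqrt s \<le> 2 * n"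
    proof -
      have "2 * n \<le> (2 * n)^2" using mult_left_mono[of 1 "2*n" "2*n"] n1 by (simp add: power2_eq_square)
      then have a: "sqrt s \<le> sqrt ((2 * n)^2)" using s2n
        by (intro real_sqrt_le_mono) linarith
      have "sqrt ((2 * n)^2) = 2 * n" using n1 real_sqrt_abs[of "2*n"] by (simp only:)
      then show ?thesis using a by linarith
    qed
    have Yb: "\<bar>Y$i$j\<bar> \<le> 2 * n^3 * \<delta>" for i j
    proof -
      have "\<bar>Y$i$j\<bar> \<le> \<delta> * oX" using Yij[of i j] oXY by linarith
      also have "\<dots> \<le> \<delta> * (n^2 * (2 * n))"
        using oXb sqs \<delta> n1 by (intro mult_left_mono) (auto intro: order_trans mult_left_mono)
      finally show ?thesis by (simp add: power2_eq_square power3_eq_cube mult_ac)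
    qed
    have TQ: "cl1 (Q - cnj_mat Q) \<le> 4 * n^5 * \<delta>"
    proof -
      have "cl1 (Q - cnj_mat Q) = (\<Sum>i\<in>UNIV. \<Sum>j\<in>UNIV. 2 * \<bar>Y$i$j\<bar>)"
        unfolding cl1_def cnj_mat_def Y_def im_mat_def by (simp add: cmod_cnj_diff)
      also have "\<dots> \<le> (\<Sum>i\<in>(UNIV::'n set). \<Sum>j\<in>(UNIV::'n set). 2 * (2 * n^3 * \<delta>))"
        by (intro sum_mono) (use Yb in \<open>simp add: mult_ac\<close>)
      finally show ?thesis by (simp add: n_def power2_eq_square power3_eq_cube power_def mult_ac)
    qed
    have clQ: "cl1 Q \<le> 4 * n^3"
    proof -
      have "cmod (Q$i$j) \<le> 4 * n" for i j
      proof -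
        have "cmod (Q$i$j) \<le> \<bar>Re (Q$i$j)\<bar> + \<bar>Im (Q$i$j)\<bar>" by (rule cmod_le)
        also have "\<dots> \<le> 2 * n + 2 * n"
        proof (rule add_mono)
          show "\<bar>Re (Q$i$j)\<bar> \<le> 2 * n" using Xij[of i j] sqs unfolding X_def re_mat_def by simp
          have "\<bar>Im (Q$i$j)\<bar> \<le> 2 * n^3 * \<delta>" using Yb[of i j] unfolding Y_def im_mat_def by simp
          also have "\<dots> \<le> 1" using dn by (simp add: mult_ac)
          also have "\<dots> \<le> 2 * n" using n1 by simp
          finally show "\<bar>Im (Q$i$j)\<bar> \<le> 2 * n" .
        qed
        finally show ?thesis by simp
      qed
      then have "cl1 Q \<le> n * n * (4 * n)" using cl1_bound[of Q "4 * n"] unfolding n_def by simp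
      then show ?thesis by (simp add: power3_eq_cube mult_ac)
    qed
    have "4 * n^5 * \<delta> < 4 * n^5 * \<delta>0" using \<delta> n1 by simp
    also have "\<dots> \<le> 4 * n^5 * (\<epsilon> / (4 * n^5))" unfolding \<delta>0_def using n1 by (intro mult_left_mono) auto
    also have "\<dots> = \<epsilon>" using n1 by simp
    finally have "cl1 (Q - cnj_mat Q) < \<epsilon>" using TQ by linarith
    then obtain U where USO: "U \<in> SO_R" and Ub: "cl1 (Q - cplx_mat U) \<le> K * cl1 (Q - cnj_mat Q)"
      using H QS clQ by blast
    have "opnorm_c (Q - cplx_mat U) \<le> K * (4 * n^5 * \<delta>)"
      using opnorm_c_le_cl1[of "Q - cplx_mat U"] Ub mult_left_mono[OF TQ, of K] K by linarith
    also have "\<dots> < C * \<delta>" unfolding C_def using \<delta> by (simp add: algebra_simps)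
    finally show ?thesis using USO by blast
  qed
  show ?thesis
    using main C0 d0 by blast
qed

end
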